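(* Let $(A,B,R)$ be a normalized formal context. Then every join-irreducible element of the lattice $(\mathcal{C}_N,\leq)$ is an atom of $(\mathcal{C}_N,\leq)$.
   Context: A formal context is a triple $(A,B,R)$ with $R\subseteq A\times B$. The necessity operators are $X^{\uparrow_N}=\{a\in A\mid \text{for all } b\in B,\ (a,b)\in R\Rightarrow b\in X\}$ for $X\subseteq B$, and $Y^{\downarrow^N}=\{b\in B\mid \text{for all } a\in A,\ (a,b)\in R\Rightarrow a\in Y\}$ for $Y\subseteq A$. $\mathcal{C}_N=\{(X,Y)\mid X\subseteq B,\ Y\subseteq A,\ X^{\uparrow_N}=Y,\ Y^{\downarrow^N}=X\}$, ordered by $(X_1,Y_1)\leq(X_2,Y_2)$ iff $X_1\subseteq X_2$ (equivalently $Y_1\subseteq Y_2$); it is a complete lattice with join $(X_1\cup X_2,Y_1\cup Y_2)$, meet $(X_1\cap X_2,Y_1\cap Y_2)$ and bottom $(\varnothing,\varnothing)$. The context is normalized if for every $a\in A$ there are $b,b'\in B$ with $(a,b)\in R$, $(a,b')\notin R$, and for every $b\in B$ there are $a,a'\in A$ with $(a,b)\in R$, $(a',b)\notin R$. An element $x$ of a lattice is join-irreducible if $x$ is not the bottom element and $x=y\vee z$ implies $x=y$ or $x=z$; an atom is an element $x$ covering the bottom $\bot$, i.e. $\bot<x$ and no $y$ with $\bot<y<x$. *)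

theory Defs
  imports Main
begin

definition formal_context :: "'a set \<Rightarrow> 'b set \<Rightarrow> ('a \<times> 'b) set \<Rightarrow> bool" where
  "formal_context A B R \<longleftrightarrow> R \<subseteq> A \<times> B"

definition up_N :: "'a set \<Rightarrow> 'b set \<Rightarrow> ('a \<times> 'b) set \<Rightarrow> 'b set \<Rightarrow> 'a set" where
  "up_N A B R X = {a \<in> A. \<forall>b\<in>B. (a, b) \<in> R \<longrightarrow> b \<in> X}"

definition down_N :: "'a set \<Rightarrow> 'b set \<Rightarrow> ('a \<times> 'b) set \<Rightarrow> 'a set \<Rightarrow> 'b set" where
  "down_N A B R Y = {b \<in> B. \<forall>a\<in>A. (a, b) \<in> R \<longrightarrow> a \<in> Y}"

definition C_N :: "'a set \<Rightarrow> 'b set \<Rightarrow> ('a \<times> 'b) set \<Rightarrow> ('b set \<times> 'a set) set" where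
  "C_N A B R = {(X, Y). X \<subseteq> B \<and> Y \<subseteq> A \<and> up_N A B R X = Y \<and> down_N A B R Y = X}"

definition leq_N :: "('b set \<times> 'a set) \<Rightarrow> ('b set \<times> 'a set) \<Rightarrow> bool" where
  "leq_N p q \<longleftrightarrow> fst p \<subseteq> fst q"

definition less_N :: "('b set \<times> 'a set) \<Rightarrow> ('b set \<times> 'a set) \<Rightarrow> bool" where
  "less_N p q \<longleftrightarrow> leq_N p q \<and> p \<noteq> q"

definition join_N :: "('b set \<times> 'a set) \<Rightarrow> ('b set \<times> 'a set) \<Rightarrow> ('b set \<times> 'a set)" where
  "join_N p q = (fst p \<union> fst q, snd p \<union> snd q)"

definition bot_N :: "'b set \<times> 'a set" where
  "bot_N = ({}, {})"

definition normalized :: "'a set \<Rightarrow> 'b set \<Rightarrow> ('a \<times> 'b) set \<Rightarrow> bool" where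
  "normalized A B R \<longleftrightarrow>
     (\<forall>a\<in>A. (\<exists>b\<in>B. (a, b) \<in> R) \<and> (\<exists>b'\<in>B. (a, b') \<notin> R)) \<and>
     (\<forall>b\<in>B. (\<exists>a\<in>A. (a, b) \<in> R) \<and> (\<exists>a'\<in>A. (a', b) \<notin> R))"

definition join_irreducible_N :: "'a set \<Rightarrow> 'b set \<Rightarrow> ('a \<times> 'b) set \<Rightarrow> ('b set \<times> 'a set) \<Rightarrow> bool" where
  "join_irreducible_N A B R x \<longleftrightarrow> x \<in> C_N A B R \<and> x \<noteq> bot_N \<and>
     (\<forall>y\<in>C_N A B R. \<forall>z\<in>C_N A B R. x = join_N y z \<longrightarrow> x = y \<or> x = z)"

definition atom_N :: "'a set \<Rightarrow> 'b set \<Rightarrow> ('a \<times> 'b) set \<Rightarrow> ('b set \<times> 'a set) \<Rightarrow> bool" where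
  "atom_N A B R x \<longleftrightarrow> x \<in> C_N A B R \<and> less_N bot_N x \<and>
     \<not> (\<exists>y\<in>C_N A B R. less_N bot_N y \<and> less_N y x)"

end

theory Submission
  imports Defs
begin

theorem mainTheorem2:
  fixes A :: "'a set" and B :: "'b set" and R :: "('a \<times> 'b) set"
  assumes "formal_context A B R"
    and "normalized A B R"
    and "join_irreducible_N A B R x"
  shows "atom_N A B R x"
proof -
  have RS: "R \<subseteq> A \<times> B" using assms(1) by (simp add: formal_context_def)
  have nA: "\<And>a. a \<in> A \<Longrightarrow> \<exists>b\<in>B. (a, b) \<in> R" and nB: "\<And>b. b \<in> B \<Longrightarrow> \<exists>a\<in>A. (a, b) \<in> R"
    using assms(2) by (auto simp: normalized_def)
  obtain X Y where xe: "x = (X, Y)" by (cases x)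
  have xC: "x \<in> C_N A B R" and xb: "x \<noteq> bot_N"
    and irr: "\<And>y z. y \<in> C_N A B R \<Longrightarrow> z \<in> C_N A B R \<Longrightarrow> x = join_N y z \<Longrightarrow> x = y \<or> x = z"
    using assms(3) by (auto simp: join_irreducible_N_def)
  have XB: "X \<subseteq> B" and YA: "Y \<subseteq> A" and upX: "up_N A B R X = Y" and downY: "down_N A B R Y = X"
    using xC xe by (auto simp: C_N_def)
  have "\<not> (\<exists>y\<in>C_N A B R. less_N bot_N y \<and> less_N y x)"
  proof
    assume "\<exists>y\<in>C_N A B R. less_N bot_N y \<and> less_N y x"
    then obtain y where y1: "y \<in> C_N A B R" and y2: "less_N bot_N y" and y3: "less_N y x" by blast
    obtain X' Y' where ye: "y = (X', Y')" by (cases y)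
    have yC: "(X', Y') \<in> C_N A B R" and yb: "(X', Y') \<noteq> bot_N"
      and yx: "X' \<subseteq> X" and yne: "(X', Y') \<noteq> x"
      using y1 y2 y3 ye xe by (auto simp: less_N_def leq_N_def)
    have XB': "X' \<subseteq> B" and YA': "Y' \<subseteq> A" and upX': "up_N A B R X' = Y'" and downY': "down_N A B R Y' = X'"
      using yC by (auto simp: C_N_def)
    have YY: "Y' \<subseteq> Y" using upX upX' yx by (auto simp: up_N_def)
    have up2: "up_N A B R (X - X') = Y - Y'"
    proof
      show "up_N A B R (X - X') \<subseteq> Y - Y'"
      proof
        fix a assume a: "a \<in> up_N A B R (X - X')"
        hence aA: "a \<in> A" and sub: "\<forall>b\<in>B. (a, b) \<in> R \<longrightarrow> b \<in> X - X'" by (auto simp: up_N_def)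
        have "a \<in> Y" using upX aA sub by (auto simp: up_N_def)
        moreover have "a \<notin> Y'"
        proof
          assume "a \<in> Y'"
          hence "\<forall>b\<in>B. (a, b) \<in> R \<longrightarrow> b \<in> X'" using upX' by (auto simp: up_N_def)
          with nA[OF aA] sub show False by blast
        qed
        ultimately show "a \<in> Y - Y'" by blast
      qed
    next
      show "Y - Y' \<subseteq> up_N A B R (X - X')"
      proof
        fix a assume a: "a \<in> Y - Y'"
        hence aA: "a \<in> A" using YA by auto
        have "\<forall>b\<in>B. (a, b) \<in> R \<longrightarrow> b \<in> X" using a upX by (auto simp: up_N_def)
        moreover have "\<forall>b\<in>B. (a, b) \<in> R \<longrightarrow> b \<notin> X'"
          using a aA downY' by (auto simp: down_N_def)
        ultimately show "a \<in> up_N A B R (X - X')" using aA by (auto simp: up_N_def)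
      qed
    qed
    have down2: "down_N A B R (Y - Y') = X - X'"
    proof
      show "down_N A B R (Y - Y') \<subseteq> X - X'"
      proof
        fix b assume b: "b \<in> down_N A B R (Y - Y')"
        hence bB: "b \<in> B" and sub: "\<forall>a\<in>A. (a, b) \<in> R \<longrightarrow> a \<in> Y - Y'" by (auto simp: down_N_def)
        have "b \<in> X" using downY bB sub by (auto simp: down_N_def)
        moreover have "b \<notin> X'"
        proof
          assume "b \<in> X'"
          hence "\<forall>a\<in>A. (a, b) \<in> R \<longrightarrow> a \<in> Y'" using downY' by (auto simp: down_N_def)
          with nB[OF bB] sub show False by blast
        qed
        ultimately show "b \<in> X - X'" by blast
      qed
    next
      show "X - X' \<subseteq> down_N A B R (Y - Y')"
      proof
        fix b assume b: "b \<in> X - X'"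
        hence bB: "b \<in> B" using XB by auto
        have "\<forall>a\<in>A. (a, b) \<in> R \<longrightarrow> a \<in> Y" using b downY by (auto simp: down_N_def)
        moreover have "\<forall>a\<in>A. (a, b) \<in> R \<longrightarrow> a \<notin> Y'"
          using b bB upX' by (auto simp: up_N_def)
        ultimately show "b \<in> down_N A B R (Y - Y')" using bB by (auto simp: down_N_def)
      qed
    qed
    have zC: "(X - X', Y - Y') \<in> C_N A B R" using up2 down2 XB YA by (auto simp: C_N_def)
    have "x = join_N (X', Y') (X - X', Y - Y')" using xe yx YY by (auto simp: join_N_def)
    from irr[OF yC zC this] have "x = (X', Y') \<or> x = (X - X', Y - Y')" .
    thus False
    proof
      assume "x = (X', Y')" thus False using yne by simp
    next
      assume "x = (X - X', Y - Y')"
      hence "X' = {}" "Y' = {}" using xe yx YY by auto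
      thus False using yb by (simp add: bot_N_def)
    qed
  qed
  moreover have "less_N bot_N x" using xb by (simp add: less_N_def leq_N_def bot_N_def)
  ultimately show ?thesis using xC by (simp add: atom_N_def)
qed

end
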